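(* Let $\mathcal U=(\mathcal U^{ij}_{\alpha\beta})$ be a four-index complex array, and let $(X_1,Y_1,X_2,Y_2)$ and $(\widetilde X_1,\widetilde Y_1,\widetilde X_2,\widetilde Y_2)$ be two admissible decompositions of $\mathcal U$ (with the same $d_l,d_r$) in which $X_1,X_2,\widetilde X_1,\widetilde X_2$ are left-invertible and $Y_1,Y_2,\widetilde Y_1,\widetilde Y_2$ are right-invertible. Then there exist nonzero scalars $\delta_1,\delta_2\in\mathbb{C}$ with $\delta_1\delta_2=1$ and unitary matrices $W_1\in U(d_r)$, $W_2\in U(d_l)$ such that, as matrices, $$\widetilde X_i=\delta_i\,X_iW_i,\qquad \widetilde Y_i=\frac{1}{\delta_i}\,W_i^\dagger Y_i,\qquad i=1,2.$$
   Context: Fix positive integers $d$ (physical dimension), $D$ (bond dimension), $d_l,d_r$. Let $\mathcal U=(\mathcal U^{ij}_{\alpha\beta})$ with $i,j\in\{1,\dots,d\}$, $\alpha,\beta\in\{1,\dots,D\}$. An admissible decomposition of $\mathcal U$ is a quadruple of complex arrays $X_1=((X_1)^i_{\beta,b})$, $Y_1=((Y_1)^j_{b,\alpha})$ with $b\in\{1,\dots,d_r\}$, and $X_2=((X_2)^i_{\alpha,a})$, $Y_2=((Y_2)^j_{a,\beta})$ with $a\in\{1,\dots,d_l\}$, such that (a) $\mathcal U^{ij}_{\alpha\beta}=\sum_{b}(X_1)^i_{\beta,b}(Y_1)^j_{b,\alpha}=\sum_a (X_2)^i_{\alpha,a}(Y_2)^j_{a,\beta}$ for all $i,j,\alpha,\beta$;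 (b) the matrices $u$ with rows indexed by $(a,b)$ and columns by $(j,j')$, $u_{(a,b),(j,j')}=\sum_{\gamma}(Y_2)^j_{a,\gamma}(Y_1)^{j'}_{b,\gamma}$, and $v$ with rows indexed by $(i,i')$ and columns by $(b,a)$, $v_{(i,i'),(b,a)}=\sum_\gamma (X_1)^i_{\gamma,b}(X_2)^{i'}_{\gamma,a}$, are both unitary (in particular $d_ld_r=d^2$). Matrix conventions: $X_1$ is regarded as the $(dD)\times d_r$ matrix with rows $(i,\beta)$ and columns $b$; $Y_1$ as the $d_r\times(Dd)$ matrix with rows $b$ and columns $(\alpha,j)$; $X_2$ as the $(dD)\times d_l$ matrix with rows $(i,\alpha)$ and columns $a$; $Y_2$ as the $d_l\times(dD)$ matrix with rows $a$ and columns $(j,\beta)$. Left-invertible means having a left inverse (full column rank); right-invertible means having a right inverse (full row rank). Products $X_iW_i$ and $W_i^\dagger Y_i$ are ordinary matrix products in these conventions. *)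

theory Defs
  imports "Jordan_Normal_Form.Matrix"
begin

definition adj_mat :: "complex mat \<Rightarrow> complex mat" where
  "adj_mat A = mat (dim_col A) (dim_row A) (\<lambda>(i,j). cnj (A $$ (j,i)))"

definition unitary_mat :: "nat \<Rightarrow> complex mat \<Rightarrow> bool" where
  "unitary_mat n W \<longleftrightarrow> W \<in> carrier_mat n n \<and>
     adj_mat W * W = 1\<^sub>m n \<and> W * adj_mat W = 1\<^sub>m n"

definition left_invertible :: "complex mat \<Rightarrow> bool" where
  "left_invertible A \<longleftrightarrow>
     (\<exists>L \<in> carrier_mat (dim_col A) (dim_row A). L * A = 1\<^sub>m (dim_col A))"

definition right_invertible :: "complex mat \<Rightarrow> bool" where
  "right_invertible A \<longleftrightarrow>
     (\<exists>R \<in> carrier_mat (dim_col A) (dim_row A). A * R = 1\<^sub>m (dim_row A))"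

(* Index conventions (0-based):
   U i j \<alpha> \<beta> = U^{ij}_{\<alpha>\<beta>}, i,j < d, \<alpha>,\<beta> < D.
   X1 : (d*D) x dr matrix, (X1)^i_{\<beta>,b} = X1 $$ (i*D+\<beta>, b)
   Y1 : dr x (D*d) matrix, (Y1)^j_{b,\<alpha>} = Y1 $$ (b, \<alpha>*d+j)
   X2 : (d*D) x dl matrix, (X2)^i_{\<alpha>,a} = X2 $$ (i*D+\<alpha>, a)
   Y2 : dl x (d*D) matrix, (Y2)^j_{a,\<beta>} = Y2 $$ (a, j*D+\<beta>) *)

definition u_mat :: "nat \<Rightarrow> nat \<Rightarrow> nat \<Rightarrow> nat \<Rightarrow> complex mat \<Rightarrow> complex mat \<Rightarrow> complex mat" where
  "u_mat d D dl dr Y1 Y2 = mat (dl*dr) (d*d) (\<lambda>(r,c).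
     (\<Sum>\<gamma><D. Y2 $$ (r div dr, (c div d)*D+\<gamma>) * Y1 $$ (r mod dr, \<gamma>*d + c mod d)))"

definition v_mat :: "nat \<Rightarrow> nat \<Rightarrow> nat \<Rightarrow> nat \<Rightarrow> complex mat \<Rightarrow> complex mat \<Rightarrow> complex mat" where
  "v_mat d D dl dr X1 X2 = mat (d*d) (dr*dl) (\<lambda>(r,c).
     (\<Sum>\<gamma><D. X1 $$ ((r div d)*D+\<gamma>, c div dl) * X2 $$ ((r mod d)*D+\<gamma>, c mod dl)))"

definition admissible ::
  "nat \<Rightarrow> nat \<Rightarrow> nat \<Rightarrow> nat \<Rightarrow> (nat \<Rightarrow> nat \<Rightarrow> nat \<Rightarrow> nat \<Rightarrow> complex) \<Rightarrow>
   complex mat \<Rightarrow> complex mat \<Rightarrow> complex mat \<Rightarrow> complex mat \<Rightarrow> bool" where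
  "admissible d D dl dr U X1 Y1 X2 Y2 \<longleftrightarrow>
     X1 \<in> carrier_mat (d*D) dr \<and> Y1 \<in> carrier_mat dr (D*d) \<and>
     X2 \<in> carrier_mat (d*D) dl \<and> Y2 \<in> carrier_mat dl (d*D) \<and>
     (\<forall>i<d. \<forall>j<d. \<forall>\<alpha><D. \<forall>\<beta><D.
        U i j \<alpha> \<beta> = (\<Sum>b<dr. X1 $$ (i*D+\<beta>, b) * Y1 $$ (b, \<alpha>*d+j)) \<and>
        U i j \<alpha> \<beta> = (\<Sum>a<dl. X2 $$ (i*D+\<alpha>, a) * Y2 $$ (a, j*D+\<beta>))) \<and>
     unitary_mat (d*d) (u_mat d D dl dr Y1 Y2) \<and>
     unitary_mat (d*d) (v_mat d D dl dr X1 X2)"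

end

theory Submission
  imports Defs
begin

lemma mult_entry:
  assumes "A \<in> carrier_mat n k" "B \<in> carrier_mat k m" "i < n" "j < m"
  shows "(A*B)$$(i,j) = (\<Sum>l<k. A$$(i,l)*B$$(l,j))"
  using assms by (simp add: scalar_prod_def atLeast0LessThan row_def col_def)

lemma sum_split: "(\<Sum>k<m*n. f k) = (\<Sum>b<m. \<Sum>a<n. f (b*n+a::nat)) "
proof -
  have "(\<Sum>k<m*n. f k) = (\<Sum>b<m. sum f {b*n..<b*n+n})" by (simp add: sum.nat_group)
  also have "\<dots> = (\<Sum>b<m. \<Sum>a<n. f (b*n+a))"
  proof (rule sum.cong[OF refl])
    fix b assume "b \<in> {..<m}"
    have "sum f {b*n..<b*n+n} = sum f ((\<lambda>a. b*n+a) ` {..<n})"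
      by (simp add: atLeast0LessThan[symmetric] add.commute)
    also have "\<dots> = (\<Sum>a<n. f (b*n+a))" by (rule sum.reindex_cong[where l="\<lambda>a. b*n+a"]) (auto simp: inj_on_def)
    finally show "sum f {b*n..<b*n+n} = (\<Sum>a<n. f (b*n+a))" .
  qed
  finally show ?thesis .
qed

lemma adj_carrier: "A \<in> carrier_mat n m \<Longrightarrow> adj_mat A \<in> carrier_mat m n"
  by (simp add: adj_mat_def)

lemma adj_mult:
  assumes A: "A \<in> carrier_mat n k" and B: "B \<in> carrier_mat k m"
  shows "adj_mat (A*B) = adj_mat B * adj_mat A"
proof (rule eq_matI)
  fix i j assume "i < dim_row (adj_mat B * adj_mat A)" "j < dim_col (adj_mat B * adj_mat A)"
  hence i: "i < m" and j: "j < n" using A B by (simp_all add: adj_mat_def)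
  have "adj_mat (A*B) $$ (i,j) = cnj ((A*B)$$(j,i))" using A B i j by (simp add: adj_mat_def)
  also have "\<dots> = cnj (\<Sum>l<k. A$$(j,l)*B$$(l,i))" using mult_entry[OF A B j i] by simp
  also have "\<dots> = (\<Sum>l<k. adj_mat B $$ (i,l) * adj_mat A $$ (l,j))"
    unfolding cnj_sum
  proof (rule sum.cong[OF refl])
    fix l assume "l \<in> {..<k}"
    thus "cnj (A$$(j,l)*B$$(l,i)) = adj_mat B $$ (i,l) * adj_mat A $$ (l,j)"
      using A B i j by (simp add: adj_mat_def)
  qed
  also have "\<dots> = (adj_mat B * adj_mat A) $$ (i,j)"
    by (rule mult_entry[symmetric, OF adj_carrier[OF B] adj_carrier[OF A] i j])
  finally show "adj_mat (A*B) $$ (i,j) = (adj_mat B * adj_mat A) $$ (i,j)" .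
qed (use A B in \<open>simp_all add: adj_mat_def\<close>)

lemma adj_smult: "adj_mat (c \<cdot>\<^sub>m A) = cnj c \<cdot>\<^sub>m adj_mat A"
  by (rule eq_matI) (auto simp: adj_mat_def)

lemma factor_unique:
  fixes A B A' B' :: "complex mat"
  assumes A: "A \<in> carrier_mat n k" and B: "B \<in> carrier_mat k m"
    and A': "A' \<in> carrier_mat n k" and B': "B' \<in> carrier_mat k m"
    and eq: "A*B = A'*B'"
    and "left_invertible A" "right_invertible B" "left_invertible A'" "right_invertible B'"
  shows "\<exists>G \<in> carrier_mat k k. \<exists>G' \<in> carrier_mat k k. A' = A*G \<and> B' = G'*B \<and> G*G' = 1\<^sub>m k \<and> G'*G = 1\<^sub>m k"
proof -
  obtain L where L: "L \<in> carrier_mat k n" "L*A = 1\<^sub>m k" using assms(6) A unfolding left_invertible_def by auto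
  obtain R where R: "R \<in> carrier_mat m k" "B*R = 1\<^sub>m k" using assms(7) B unfolding right_invertible_def by auto
  obtain L' where L': "L' \<in> carrier_mat k n" "L'*A' = 1\<^sub>m k" using assms(8) A' unfolding left_invertible_def by auto
  obtain R' where R': "R' \<in> carrier_mat m k" "B'*R' = 1\<^sub>m k" using assms(9) B' unfolding right_invertible_def by auto
  define G where "G = B*R'"
  define G' where "G' = L'*A"
  have Gc: "G \<in> carrier_mat k k" "G' \<in> carrier_mat k k" using B R' L' A by (auto simp: G_def G'_def)
  have 1: "A' = A*G"
  proof -
    have "A' = A' * (B'*R')" using R'(2) A' by (metis right_mult_one_mat)
    also have "\<dots> = (A'*B')*R'" by (rule assoc_mult_mat[OF A' B' R'(1), symmetric])
    also have "\<dots> = (A*B)*R'" using eq by simp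
    also have "\<dots> = A*G" unfolding G_def by (rule assoc_mult_mat[OF A B R'(1)])
    finally show ?thesis .
  qed
  have 2: "B' = G'*B"
  proof -
    have "B' = (L'*A')*B'" using L'(2) B' by (metis left_mult_one_mat)
    also have "\<dots> = L'*(A'*B')" by (rule assoc_mult_mat[OF L'(1) A' B'])
    also have "\<dots> = L'*(A*B)" using eq by simp
    also have "\<dots> = G'*B" unfolding G'_def by (rule assoc_mult_mat[OF L'(1) A B, symmetric])
    finally show ?thesis .
  qed
  define T where "T = G*G'"
  have Tc: "T \<in> carrier_mat k k" using Gc by (simp add: T_def)
  have TB: "T*B \<in> carrier_mat k m" using Tc B by simp
  have AB: "A'*B' = A*(T*B)"
  proof -
    have "A'*B' = (A*G)*(G'*B)" using 1 2 by simp
    also have "\<dots> = A*(G*(G'*B))" by (rule assoc_mult_mat[OF A Gc(1) mult_carrier_mat[OF Gc(2) B]])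
    also have "G*(G'*B) = T*B" unfolding T_def by (rule assoc_mult_mat[OF Gc(1) Gc(2) B, symmetric])
    finally show ?thesis .
  qed
  have "L*(A'*B')*R = T"
  proof -
    have "L*(A*(T*B)) = (L*A)*(T*B)" by (rule assoc_mult_mat[OF L(1) A TB, symmetric])
    also have "\<dots> = T*B" using L(2) TB by (metis left_mult_one_mat)
    finally have "L*(A'*B')*R = (T*B)*R" using AB by simp
    also have "\<dots> = T*(B*R)" by (rule assoc_mult_mat[OF Tc B R(1)])
    also have "\<dots> = T" using R(2) Tc by (metis right_mult_one_mat)
    finally show ?thesis .
  qed
  moreover have "L*(A'*B')*R = 1\<^sub>m k"
  proof -
    have "L*(A*B) = (L*A)*B" by (rule assoc_mult_mat[OF L(1) A B, symmetric])
    also have "\<dots> = B" using L(2) B by (metis left_mult_one_mat)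
    finally show ?thesis using eq R(2) by simp
  qed
  ultimately have 3: "G*G' = 1\<^sub>m k" unfolding T_def by simp
  have 4: "G'*G = 1\<^sub>m k"
  proof -
    have LA: "L'*A \<in> carrier_mat k k" using L'(1) A by simp
    have "G'*G = (L'*A)*(B*R')" unfolding G_def G'_def ..
    also have "\<dots> = ((L'*A)*B)*R'" by (rule assoc_mult_mat[OF LA B R'(1), symmetric])
    also have "(L'*A)*B = L'*(A*B)" by (rule assoc_mult_mat[OF L'(1) A B])
    also have "\<dots> = (L'*A')*B'" unfolding eq by (rule assoc_mult_mat[OF L'(1) A' B', symmetric])
    also have "\<dots> = B'" using L'(2) B' by (metis left_mult_one_mat)
    finally show ?thesis using R'(2) by simp
  qed
  show ?thesis using Gc 1 2 3 4 by blast
qed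

lemma idx_bound: "(i::nat) < d \<Longrightarrow> g < D \<Longrightarrow> i*D+g < d*D"
proof -
  assume "i<d" "g<D"
  hence "Suc i * D \<le> d*D" by (intro mult_le_mono1) simp
  thus ?thesis using \<open>g<D\<close> by simp
qed

definition kron :: "nat \<Rightarrow> nat \<Rightarrow> complex mat \<Rightarrow> complex mat \<Rightarrow> complex mat" where
 "kron m n G H = mat (m*n) (m*n) (\<lambda>(r,c). G$$(r div n, c div n) * H$$(r mod n, c mod n))"

lemma divmod_bounds: assumes "(c::nat) < m*n" shows "c div n < m \<and> c mod n < n"
proof
  have "n > 0" using assms by (cases n) auto
  thus "c mod n < n" by simp
  show "c div n < m" using assms by (simp add: less_mult_imp_div_less)
qed

lemma vK:
  assumes X1: "X1 \<in> carrier_mat (d*D) dr" and X2: "X2 \<in> carrier_mat (d*D) dl"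
    and G: "G \<in> carrier_mat dr dr" and H: "H \<in> carrier_mat dl dl"
  shows "v_mat d D dl dr (X1*G) (X2*H) = v_mat d D dl dr X1 X2 * kron dr dl G H"
proof (rule eq_matI)
  show "dim_row (v_mat d D dl dr (X1*G) (X2*H)) = dim_row (v_mat d D dl dr X1 X2 * kron dr dl G H)"
    "dim_col (v_mat d D dl dr (X1*G) (X2*H)) = dim_col (v_mat d D dl dr X1 X2 * kron dr dl G H)"
    by (simp_all add: v_mat_def kron_def)
  fix r c assume r: "r < dim_row (v_mat d D dl dr X1 X2 * kron dr dl G H)"
    and c: "c < dim_col (v_mat d D dl dr X1 X2 * kron dr dl G H)"
  hence r: "r < d*d" and c: "c < dr*dl" by (simp_all add: v_mat_def kron_def)
  have rd: "r div d < d" "r mod d < d" using divmod_bounds[OF r] by auto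
  have cb: "c div dl < dr" "c mod dl < dl" using divmod_bounds[OF c] by auto
  define p1 p2 b a where "p1 = (r div d)*D" and "p2 = (r mod d)*D" and "b = c div dl" and "a = c mod dl"
  have p1: "\<And>g. g < D \<Longrightarrow> p1 + g < d*D" unfolding p1_def using rd idx_bound by blast
  have p2: "\<And>g. g < D \<Longrightarrow> p2 + g < d*D" unfolding p2_def using rd idx_bound by blast
  have "v_mat d D dl dr (X1*G) (X2*H) $$ (r,c) = (\<Sum>g<D. (X1*G)$$(p1+g,b) * (X2*H)$$(p2+g,a))"
    using r c by (simp add: v_mat_def p1_def p2_def a_def b_def)
  also have "\<dots> = (\<Sum>g<D. (\<Sum>b'<dr. X1$$(p1+g,b')*G$$(b',b)) * (\<Sum>a'<dl. X2$$(p2+g,a')*H$$(a',a)))"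
  proof (rule sum.cong[OF refl])
    fix g assume "g \<in> {..<D}"
    hence g: "g < D" by simp
    show "(X1*G)$$(p1+g,b) * (X2*H)$$(p2+g,a) = (\<Sum>b'<dr. X1$$(p1+g,b')*G$$(b',b)) * (\<Sum>a'<dl. X2$$(p2+g,a')*H$$(a',a))"
      using mult_entry[OF X1 G p1[OF g], of b] mult_entry[OF X2 H p2[OF g], of a] cb unfolding a_def b_def by simp
  qed
  also have "\<dots> = (\<Sum>g<D. \<Sum>b'<dr. \<Sum>a'<dl. X1$$(p1+g,b')*G$$(b',b) * (X2$$(p2+g,a')*H$$(a',a)))"
    by (simp add: sum_product)
  also have "\<dots> = (\<Sum>b'<dr. \<Sum>g<D. \<Sum>a'<dl. X1$$(p1+g,b')*G$$(b',b) * (X2$$(p2+g,a')*H$$(a',a)))"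
    by (rule sum.swap)
  also have "\<dots> = (\<Sum>b'<dr. \<Sum>a'<dl. \<Sum>g<D. X1$$(p1+g,b')*G$$(b',b) * (X2$$(p2+g,a')*H$$(a',a)))"
    by (rule sum.cong[OF refl], rule sum.swap)
  also have "\<dots> = (\<Sum>b'<dr. \<Sum>a'<dl. (\<Sum>g<D. X1$$(p1+g,b')*X2$$(p2+g,a')) * (G$$(b',b)*H$$(a',a)))"
    by (rule sum.cong[OF refl], rule sum.cong[OF refl], subst sum_distrib_right, rule sum.cong[OF refl], simp add: mult_ac)
  also have "\<dots> = (\<Sum>b'<dr. \<Sum>a'<dl. v_mat d D dl dr X1 X2 $$ (r, b'*dl+a') * kron dr dl G H $$ (b'*dl+a', c))"
  proof (rule sum.cong[OF refl], rule sum.cong[OF refl])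
    fix b' a' assume "b' \<in> {..<dr}" "a' \<in> {..<dl}"
    hence k: "b'*dl+a' < dr*dl" using idx_bound[of b' dr a' dl] by auto
    have dm: "(b'*dl+a') div dl = b'" "(b'*dl+a') mod dl = a'" using \<open>a' \<in> {..<dl}\<close> by auto
    show "(\<Sum>g<D. X1$$(p1+g,b')*X2$$(p2+g,a')) * (G$$(b',b)*H$$(a',a)) =
      v_mat d D dl dr X1 X2 $$ (r, b'*dl+a') * kron dr dl G H $$ (b'*dl+a', c)"
    proof -
      have k2: "b'*dl+a' < dl*dr" using k by (simp add: mult.commute)
      have e1: "v_mat d D dl dr X1 X2 $$ (r, b'*dl+a') = (\<Sum>g<D. X1$$(p1+g,b')*X2$$(p2+g,a'))"
        unfolding v_mat_def using index_mat(1)[of r "d*d" "b'*dl+a'" "dr*dl"] r k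
        by (simp only: dm p1_def p2_def) (use \<open>a' \<in> {..<dl}\<close> in simp)
      have e2: "kron dr dl G H $$ (b'*dl+a', c) = G$$(b',b)*H$$(a',a)"
        unfolding kron_def using k c by (simp only: index_mat(1) dm a_def b_def) (use \<open>a' \<in> {..<dl}\<close> in simp)
      show ?thesis using e1 e2 by simp
    qed
  qed
  also have "\<dots> = (\<Sum>k<dr*dl. v_mat d D dl dr X1 X2 $$ (r, k) * kron dr dl G H $$ (k, c))"
    by (rule sum_split[symmetric])
  also have "\<dots> = (v_mat d D dl dr X1 X2 * kron dr dl G H) $$ (r,c)"
    by (rule mult_entry[symmetric, of _ "d*d" "dr*dl" _ "dr*dl"]) (auto simp: v_mat_def kron_def r c)
  finally show "v_mat d D dl dr (X1*G) (X2*H) $$ (r,c) = (v_mat d D dl dr X1 X2 * kron dr dl G H) $$ (r,c)" .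
qed

lemma smult_smult_mat': "a \<cdot>\<^sub>m (b \<cdot>\<^sub>m A) = (a*b::complex) \<cdot>\<^sub>m A"
  by (rule eq_matI) auto

lemma one_smult_mat': "(1::complex) \<cdot>\<^sub>m A = A"
  by (rule eq_matI) auto

lemma kron_carrier: "kron m n G H \<in> carrier_mat (m*n) (m*n)"
  by (simp add: kron_def)

lemma KK:
  assumes G: "G \<in> carrier_mat dr dr" and H: "H \<in> carrier_mat dl dl"
    and b: "b1 < dr" "b2 < dr" and a: "a1 < dl" "a2 < dl"
  shows "(adj_mat (kron dr dl G H) * kron dr dl G H) $$ (b1*dl+a1, b2*dl+a2)
      = (adj_mat G * G)$$(b1,b2) * (adj_mat H * H)$$(a1,a2)"
proof -
  let ?K = "kron dr dl G H"
  have i1: "b1*dl+a1 < dr*dl" "b2*dl+a2 < dr*dl" using idx_bound[of b1 dr a1 dl] idx_bound[of b2 dr a2 dl] b a by auto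
  have "(adj_mat ?K * ?K) $$ (b1*dl+a1, b2*dl+a2) = (\<Sum>k<dr*dl. adj_mat ?K $$ (b1*dl+a1, k) * ?K $$ (k, b2*dl+a2))"
    by (rule mult_entry[OF adj_carrier[OF kron_carrier] kron_carrier i1])
  also have "\<dots> = (\<Sum>b'<dr. \<Sum>a'<dl. adj_mat ?K $$ (b1*dl+a1, b'*dl+a') * ?K $$ (b'*dl+a', b2*dl+a2))"
    by (rule sum_split)
  also have "\<dots> = (\<Sum>b'<dr. \<Sum>a'<dl. (cnj (G$$(b',b1)) * G$$(b',b2)) * (cnj (H$$(a',a1)) * H$$(a',a2)))"
  proof (rule sum.cong[OF refl], rule sum.cong[OF refl])
    fix b' a' assume "b' \<in> {..<dr}" "a' \<in> {..<dl}"
    hence k: "b'*dl+a' < dr*dl" using idx_bound[of b' dr a' dl] by auto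
    have e1: "adj_mat ?K $$ (b1*dl+a1, b'*dl+a') = cnj (G$$(b',b1) * H$$(a',a1))"
      using k i1 \<open>a' \<in> {..<dl}\<close> a by (simp add: adj_mat_def kron_def)
    have e2: "?K $$ (b'*dl+a', b2*dl+a2) = G$$(b',b2) * H$$(a',a2)"
      using k i1 \<open>a' \<in> {..<dl}\<close> a by (simp add: kron_def)
    show "adj_mat ?K $$ (b1*dl+a1, b'*dl+a') * ?K $$ (b'*dl+a', b2*dl+a2) =
       (cnj (G$$(b',b1)) * G$$(b',b2)) * (cnj (H$$(a',a1)) * H$$(a',a2))"
      unfolding e1 e2 by (simp add: mult_ac)
  qed
  also have "\<dots> = (\<Sum>b'<dr. cnj (G$$(b',b1)) * G$$(b',b2)) * (\<Sum>a'<dl. cnj (H$$(a',a1)) * H$$(a',a2))"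
    by (simp add: sum_product)
  also have "\<dots> = (adj_mat G * G)$$(b1,b2) * (adj_mat H * H)$$(a1,a2)"
  proof -
    have "(adj_mat G * G)$$(b1,b2) = (\<Sum>b'<dr. adj_mat G $$ (b1,b') * G$$(b',b2))"
      by (rule mult_entry[OF adj_carrier[OF G] G b])
    also have "\<dots> = (\<Sum>b'<dr. cnj (G$$(b',b1)) * G$$(b',b2))"
      using G b by (intro sum.cong refl) (simp add: adj_mat_def)
    finally have 1: "(adj_mat G * G)$$(b1,b2) = \<dots>" .
    have "(adj_mat H * H)$$(a1,a2) = (\<Sum>a'<dl. adj_mat H $$ (a1,a') * H$$(a',a2))"
      by (rule mult_entry[OF adj_carrier[OF H] H a])
    also have "\<dots> = (\<Sum>a'<dl. cnj (H$$(a',a1)) * H$$(a',a2))"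
      using H a by (intro sum.cong refl) (simp add: adj_mat_def)
    finally have 2: "(adj_mat H * H)$$(a1,a2) = \<dots>" .
    show ?thesis unfolding 1 2 ..
  qed
  finally show ?thesis .
qed

lemma idx_inj: assumes a: "(a1::nat) < dl" "a2 < dl" shows "(b1*dl+a1 = b2*dl+a2) = (b1=b2 \<and> a1=a2)"
proof
  assume e: "b1*dl+a1 = b2*dl+a2"
  have p: "0 < dl" using a by simp
  have 1: "(b1*dl+a1) div dl = b1" "(b1*dl+a1) mod dl = a1" using a(1) p by simp_all
  have 2: "(b2*dl+a2) div dl = b2" "(b2*dl+a2) mod dl = a2" using a(2) p by simp_all
  have "b1 = b2" using 1(1) 2(1) unfolding e by simp
  moreover have "a1 = a2" using 1(2) 2(2) unfolding e by simp
  ultimately show "b1=b2 \<and> a1=a2" by simp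
next
  assume "b1=b2 \<and> a1=a2" thus "b1*dl+a1 = b2*dl+a2" by simp
qed

lemma adm_carrier:
  assumes "admissible d D dl dr U X1 Y1 X2 Y2"
  shows "X1 \<in> carrier_mat (d*D) dr" "Y1 \<in> carrier_mat dr (D*d)"
    "X2 \<in> carrier_mat (d*D) dl" "Y2 \<in> carrier_mat dl (d*D)"
    "unitary_mat (d*d) (v_mat d D dl dr X1 X2)"
  using assms unfolding admissible_def by blast+

lemma adm_eq:
  assumes "admissible d D dl dr U X1 Y1 X2 Y2" "i<d" "j<d" "\<alpha><D" "\<beta><D"
  shows "U i j \<alpha> \<beta> = (\<Sum>b<dr. X1 $$ (i*D+\<beta>, b) * Y1 $$ (b, \<alpha>*d+j))"
    "U i j \<alpha> \<beta> = (\<Sum>a<dl. X2 $$ (i*D+\<alpha>, a) * Y2 $$ (a, j*D+\<beta>))"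
proof -
  have "\<forall>i<d. \<forall>j<d. \<forall>\<alpha><D. \<forall>\<beta><D.
        U i j \<alpha> \<beta> = (\<Sum>b<dr. X1 $$ (i*D+\<beta>, b) * Y1 $$ (b, \<alpha>*d+j)) \<and>
        U i j \<alpha> \<beta> = (\<Sum>a<dl. X2 $$ (i*D+\<alpha>, a) * Y2 $$ (a, j*D+\<beta>))"
    using assms(1) unfolding admissible_def by blast
  thus "U i j \<alpha> \<beta> = (\<Sum>b<dr. X1 $$ (i*D+\<beta>, b) * Y1 $$ (b, \<alpha>*d+j))"
    "U i j \<alpha> \<beta> = (\<Sum>a<dl. X2 $$ (i*D+\<alpha>, a) * Y2 $$ (a, j*D+\<beta>))"
    using assms(2-5) by blast+
qed

lemma adm_prod:
  assumes adm: "admissible d D dl dr U X1 Y1 X2 Y2" and adm': "admissible d D dl dr U X1' Y1' X2' Y2'"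
  shows "X1*Y1 = X1'*Y1'" "X2*Y2 = X2'*Y2'"
proof -
  note c = adm_carrier[OF adm] and c' = adm_carrier[OF adm']
  show "X1*Y1 = X1'*Y1'"
  proof (rule eq_matI)
    fix p q assume "p < dim_row (X1'*Y1')" "q < dim_col (X1'*Y1')"
    hence p: "p < d*D" and q: "q < D*d" using c' by auto
    have pb: "p div D < d" "p mod D < D" using divmod_bounds[OF p] by auto
    have qb: "q div d < D" "q mod d < d" using divmod_bounds[OF q] by auto
    have "(X1*Y1)$$(p,q) = (\<Sum>b<dr. X1$$(p,b)*Y1$$(b,q))" by (rule mult_entry[OF c(1,2) p q])
    also have "\<dots> = U (p div D) (q mod d) (q div d) (p mod D)"
      using adm_eq(1)[OF adm pb(1) qb(2) qb(1) pb(2)] by (simp only: div_mult_mod_eq)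
    also have "\<dots> = (\<Sum>b<dr. X1'$$(p,b)*Y1'$$(b,q))"
      using adm_eq(1)[OF adm' pb(1) qb(2) qb(1) pb(2)] by (simp only: div_mult_mod_eq)
    also have "\<dots> = (X1'*Y1')$$(p,q)" by (rule mult_entry[OF c'(1,2) p q, symmetric])
    finally show "(X1*Y1)$$(p,q) = (X1'*Y1')$$(p,q)" .
  qed (use c c' in auto)
  show "X2*Y2 = X2'*Y2'"
  proof (rule eq_matI)
    fix p q assume "p < dim_row (X2'*Y2')" "q < dim_col (X2'*Y2')"
    hence p: "p < d*D" and q: "q < d*D" using c' by auto
    have pb: "p div D < d" "p mod D < D" using divmod_bounds[OF p] by auto
    have qb: "q div D < d" "q mod D < D" using divmod_bounds[OF q] by auto
    have "(X2*Y2)$$(p,q) = (\<Sum>a<dl. X2$$(p,a)*Y2$$(a,q))" by (rule mult_entry[OF c(3,4) p q])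
    also have "\<dots> = U (p div D) (q div D) (p mod D) (q mod D)"
      using adm_eq(2)[OF adm pb(1) qb(1) pb(2) qb(2)] by (simp only: div_mult_mod_eq)
    also have "\<dots> = (\<Sum>a<dl. X2'$$(p,a)*Y2'$$(a,q))"
      using adm_eq(2)[OF adm' pb(1) qb(1) pb(2) qb(2)] by (simp only: div_mult_mod_eq)
    also have "\<dots> = (X2'*Y2')$$(p,q)" by (rule mult_entry[OF c'(3,4) p q, symmetric])
    finally show "(X2*Y2)$$(p,q) = (X2'*Y2')$$(p,q)" .
  qed (use c c' in auto)
qed


lemma PQ_entry:
  assumes G: "G \<in> carrier_mat dr dr" and H: "H \<in> carrier_mat dl dl"
    and KK1: "adj_mat (kron dr dl G H) * kron dr dl G H = 1\<^sub>m (dr*dl)"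
    and b: "b1 < dr" "b2 < dr" and a: "a1 < dl" "a2 < dl"
  shows "(adj_mat G * G)$$(b1,b2) * (adj_mat H * H)$$(a1,a2) = (if b1 = b2 \<and> a1 = a2 then 1 else 0)"
proof -
  have i1: "b1*dl+a1 < dr*dl" "b2*dl+a2 < dr*dl" using idx_bound[of b1 dr a1 dl] idx_bound[of b2 dr a2 dl] b a by auto
  have "(adj_mat G * G)$$(b1,b2) * (adj_mat H * H)$$(a1,a2) = 1\<^sub>m (dr*dl) $$ (b1*dl+a1, b2*dl+a2)"
    using KK[OF G H b a] KK1 by simp
  also have "\<dots> = (if b1 = b2 \<and> a1 = a2 then 1 else 0)" using i1 idx_inj[OF a, of b1 b2] by simp
  finally show ?thesis .
qed

lemma gram_real:
  assumes G: "G \<in> carrier_mat dr dr" and "0 < dr"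
  shows "(adj_mat G * G)$$(0,0) = complex_of_real (\<Sum>k<dr. (cmod (G$$(k,0)))^2)"
proof -
  have "(adj_mat G * G)$$(0,0) = (\<Sum>k<dr. adj_mat G $$ (0,k) * G$$(k,0))"
    by (rule mult_entry[OF adj_carrier[OF G] G assms(2) assms(2)])
  also have "\<dots> = (\<Sum>k<dr. complex_of_real ((cmod (G$$(k,0)))^2))"
  proof (rule sum.cong[OF refl])
    fix k assume "k \<in> {..<dr}"
    hence "adj_mat G $$ (0,k) = cnj (G$$(k,0))" using G assms(2) by (simp add: adj_mat_def)
    thus "adj_mat G $$ (0,k) * G$$(k,0) = complex_of_real ((cmod (G$$(k,0)))^2)"
      by (simp only: complex_norm_square mult.commute)
  qed
  also have "\<dots> = complex_of_real (\<Sum>k<dr. (cmod (G$$(k,0)))^2)" by simp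
  finally show ?thesis .
qed

theorem mainTheorem2:
  fixes d D dl dr :: nat
    and U :: "nat \<Rightarrow> nat \<Rightarrow> nat \<Rightarrow> nat \<Rightarrow> complex"
    and X1 Y1 X2 Y2 X1' Y1' X2' Y2' :: "complex mat"
  assumes "d > 0" "D > 0" "dl > 0" "dr > 0"
    and "admissible d D dl dr U X1 Y1 X2 Y2"
    and "admissible d D dl dr U X1' Y1' X2' Y2'"
    and "left_invertible X1" "left_invertible X2"
    and "left_invertible X1'" "left_invertible X2'"
    and "right_invertible Y1" "right_invertible Y2"
    and "right_invertible Y1'" "right_invertible Y2'"
  shows "\<exists>\<delta>1 \<delta>2 :: complex. \<exists>W1 W2.
     \<delta>1 \<noteq> 0 \<and> \<delta>2 \<noteq> 0 \<and> \<delta>1 * \<delta>2 = 1 \<and>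
     unitary_mat dr W1 \<and> unitary_mat dl W2 \<and>
     X1' = \<delta>1 \<cdot>\<^sub>m (X1 * W1) \<and> Y1' = (1 / \<delta>1) \<cdot>\<^sub>m (adj_mat W1 * Y1) \<and>
     X2' = \<delta>2 \<cdot>\<^sub>m (X2 * W2) \<and> Y2' = (1 / \<delta>2) \<cdot>\<^sub>m (adj_mat W2 * Y2)"
proof -
  note adm = assms(5) and adm' = assms(6)
  note c = adm_carrier[OF adm] and c' = adm_carrier[OF adm']
  obtain G G' where Gc: "G \<in> carrier_mat dr dr" "G' \<in> carrier_mat dr dr"
    and G: "X1' = X1*G" "Y1' = G'*Y1" "G*G' = 1\<^sub>m dr" "G'*G = 1\<^sub>m dr"
    using factor_unique[OF c(1,2) c'(1,2) adm_prod(1)[OF adm adm'] assms(7,11,9,13)] by blast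
  obtain H H' where Hc: "H \<in> carrier_mat dl dl" "H' \<in> carrier_mat dl dl"
    and H: "X2' = X2*H" "Y2' = H'*Y2" "H*H' = 1\<^sub>m dl" "H'*H = 1\<^sub>m dl"
    using factor_unique[OF c(3,4) c'(3,4) adm_prod(2)[OF adm adm'] assms(8,12,10,14)] by blast
  define K where "K = kron dr dl G H"
  define v where "v = v_mat d D dl dr X1 X2"
  define v' where "v' = v_mat d D dl dr X1' X2'"
  have vv: "v' = v * K" unfolding v'_def v_def K_def G H by (rule vK[OF c(1,3) Gc(1) Hc(1)])
  have vc: "v \<in> carrier_mat (d*d) (dr*dl)" by (simp add: v_def v_mat_def)
  have Kc: "K \<in> carrier_mat (dr*dl) (dr*dl)" unfolding K_def by (rule kron_carrier)
  have N: "dr*dl = d*d" using c(5) unfolding unitary_mat_def v_mat_def by auto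
  have vu: "adj_mat v * v = 1\<^sub>m (dr*dl)" using c(5) unfolding unitary_mat_def v_def N by simp
  have vu': "adj_mat v' * v' = 1\<^sub>m (dr*dl)" using c'(5) unfolding unitary_mat_def v'_def N by simp
  have avc: "adj_mat v \<in> carrier_mat (dr*dl) (d*d)" using adj_carrier[OF vc] .
  have akc: "adj_mat K \<in> carrier_mat (dr*dl) (dr*dl)" using adj_carrier[OF Kc] .
  have "adj_mat v' * v' = (adj_mat K * adj_mat v) * (v * K)" unfolding vv adj_mult[OF vc Kc] ..
  also have "\<dots> = adj_mat K * (adj_mat v * (v * K))"
    by (rule assoc_mult_mat[OF akc avc mult_carrier_mat[OF vc Kc]])
  also have "adj_mat v * (v * K) = (adj_mat v * v) * K"
    by (rule assoc_mult_mat[OF avc vc Kc, symmetric])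
  also have "\<dots> = K" unfolding vu using Kc by simp
  finally have KK1: "adj_mat K * K = 1\<^sub>m (dr*dl)" using vu' by simp
  define P where "P = adj_mat G * G"
  define Q where "Q = adj_mat H * H"
  have Pc: "P \<in> carrier_mat dr dr" unfolding P_def by (rule mult_carrier_mat[OF adj_carrier[OF Gc(1)] Gc(1)])
  have Qc: "Q \<in> carrier_mat dl dl" unfolding Q_def by (rule mult_carrier_mat[OF adj_carrier[OF Hc(1)] Hc(1)])
  have PQ: "\<And>b1 b2 a1 a2. b1 < dr \<Longrightarrow> b2 < dr \<Longrightarrow> a1 < dl \<Longrightarrow> a2 < dl \<Longrightarrow>
     P$$(b1,b2) * Q$$(a1,a2) = (if b1 = b2 \<and> a1 = a2 then 1 else 0)"
    unfolding P_def Q_def using PQ_entry[OF Gc(1) Hc(1) KK1[unfolded K_def]] by blast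
  define s where "s = (\<Sum>k<dr. (cmod (G$$(k,0)))^2)"
  define cc where "cc = P$$(0,0)"
  define q where "q = Q$$(0,0)"
  have ccs: "cc = complex_of_real s" unfolding cc_def s_def P_def by (rule gram_real[OF Gc(1) assms(4)])
  have cq: "cc * q = 1" using PQ[of 0 0 0 0] assms(3,4) unfolding cc_def q_def by simp
  have s0: "s \<ge> 0" unfolding s_def by (simp add: sum_nonneg)
  have "s \<noteq> 0" using cq ccs by auto
  hence spos: "s > 0" using s0 by simp
  have Pe: "P = cc \<cdot>\<^sub>m 1\<^sub>m dr"
  proof (rule eq_matI)
    fix i j assume "i < dim_row (cc \<cdot>\<^sub>m 1\<^sub>m dr)" "j < dim_col (cc \<cdot>\<^sub>m 1\<^sub>m dr)"
    hence ij: "i < dr" "j < dr" by auto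
    have "P$$(i,j) * q = (if i = j then 1 else 0)" using PQ[of i j 0 0] ij assms(3) unfolding q_def by simp
    hence "P$$(i,j) * q * cc = (if i = j then cc else 0)" by simp
    hence "P$$(i,j) = (if i = j then cc else 0)" using cq by (simp add: mult.assoc mult.commute[of q])
    thus "P$$(i,j) = (cc \<cdot>\<^sub>m 1\<^sub>m dr)$$(i,j)" using ij by simp
  qed (use Pc in auto)
  have Qe: "Q = q \<cdot>\<^sub>m 1\<^sub>m dl"
  proof (rule eq_matI)
    fix i j assume "i < dim_row (q \<cdot>\<^sub>m 1\<^sub>m dl)" "j < dim_col (q \<cdot>\<^sub>m 1\<^sub>m dl)"
    hence ij: "i < dl" "j < dl" by auto
    have "cc * Q$$(i,j) = (if i = j then 1 else 0)" using PQ[of 0 0 i j] ij assms(4) unfolding cc_def by simp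
    hence "q * (cc * Q$$(i,j)) = (if i = j then q else 0)" by simp
    hence "Q$$(i,j) = (if i = j then q else 0)" using cq by (simp add: mult.assoc[symmetric] mult.commute[of q])
    thus "Q$$(i,j) = (q \<cdot>\<^sub>m 1\<^sub>m dl)$$(i,j)" using ij by simp
  qed (use Qc in auto)
  define \<delta> where "\<delta> = complex_of_real (sqrt s)"
  have ss: "sqrt s * sqrt s = s" using s0 by simp
  have dd: "\<delta> * \<delta> = cc" unfolding \<delta>_def ccs of_real_mult[symmetric] ss ..
  have d0: "\<delta> \<noteq> 0" unfolding \<delta>_def using spos by simp
  have cnjd: "cnj \<delta> = \<delta>" unfolding \<delta>_def by simp
  have cc0: "cc \<noteq> 0" using cq by auto
  have qcc: "q = 1 / cc" using cq cc0 by (simp add: field_simps)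
  have adjG: "adj_mat G = cc \<cdot>\<^sub>m G'"
  proof -
    have aG: "adj_mat G \<in> carrier_mat dr dr" using adj_carrier[OF Gc(1)] .
    have "adj_mat G = adj_mat G * (G*G')" using G(3) aG by simp
    also have "\<dots> = (adj_mat G * G) * G'" by (rule assoc_mult_mat[OF aG Gc(1) Gc(2), symmetric])
    also have "\<dots> = cc \<cdot>\<^sub>m G'" using Pe Gc(2) unfolding P_def by (simp add: mult_smult_assoc_mat[OF one_carrier_mat Gc(2)])
    finally show ?thesis .
  qed
  have adjH: "adj_mat H = q \<cdot>\<^sub>m H'"
  proof -
    have aH: "adj_mat H \<in> carrier_mat dl dl" using adj_carrier[OF Hc(1)] .
    have "adj_mat H = adj_mat H * (H*H')" using H(3) aH by simp
    also have "\<dots> = (adj_mat H * H) * H'" by (rule assoc_mult_mat[OF aH Hc(1) Hc(2), symmetric])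
    also have "\<dots> = q \<cdot>\<^sub>m H'" using Qe Hc(2) unfolding Q_def by (simp add: mult_smult_assoc_mat[OF one_carrier_mat Hc(2)])
    finally show ?thesis .
  qed
  define W1 where "W1 = (1/\<delta>) \<cdot>\<^sub>m G"
  define W2 where "W2 = \<delta> \<cdot>\<^sub>m H"
  have cinv: "cnj (1/\<delta>) = 1/\<delta>" using cnjd by (simp add: complex_cnj_divide)
  have k1: "cnj (1/\<delta>) * cc = \<delta>"
  proof -
    have "cnj (1/\<delta>) * cc = (1/\<delta>) * (\<delta> * \<delta>)" unfolding cinv dd ..
    also have "\<dots> = \<delta>" using d0 by simp
    finally show ?thesis .
  qed
  have k2: "cnj \<delta> * q = 1/\<delta>"
  proof -
    have "cnj \<delta> * q = \<delta> * (1/(\<delta> * \<delta>))" unfolding cnjd qcc dd ..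
    also have "\<dots> = 1/\<delta>" using d0 by simp
    finally show ?thesis .
  qed
  have aW1: "adj_mat W1 = \<delta> \<cdot>\<^sub>m G'"
    unfolding W1_def adj_smult adjG smult_smult_mat' k1 ..
  have aW2: "adj_mat W2 = (1/\<delta>) \<cdot>\<^sub>m H'"
    unfolding W2_def adj_smult adjH smult_smult_mat' k2 ..
  have W1c: "W1 \<in> carrier_mat dr dr" using Gc by (simp add: W1_def)
  have W2c: "W2 \<in> carrier_mat dl dl" using Hc by (simp add: W2_def)
  have di: "\<delta> * (1/\<delta>) = 1" "(1/\<delta>) * \<delta> = 1" using d0 by simp_all
  have "adj_mat W1 * W1 = \<delta> \<cdot>\<^sub>m (G' * ((1/\<delta>) \<cdot>\<^sub>m G))"
    unfolding aW1 unfolding W1_def by (rule mult_smult_assoc_mat[OF Gc(2) smult_carrier_mat[OF Gc(1)]])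
  also have "\<dots> = 1\<^sub>m dr"
    unfolding mult_smult_distrib[OF Gc(2) Gc(1)] smult_smult_mat' di G(4) one_smult_mat' ..
  finally have u1a: "adj_mat W1 * W1 = 1\<^sub>m dr" .
  have "W1 * adj_mat W1 = (1/\<delta>) \<cdot>\<^sub>m (G * (\<delta> \<cdot>\<^sub>m G'))"
    unfolding aW1 unfolding W1_def by (rule mult_smult_assoc_mat[OF Gc(1) smult_carrier_mat[OF Gc(2)]])
  also have "\<dots> = 1\<^sub>m dr"
    unfolding mult_smult_distrib[OF Gc(1) Gc(2)] smult_smult_mat' di G(3) one_smult_mat' ..
  finally have u1b: "W1 * adj_mat W1 = 1\<^sub>m dr" .
  have u1: "unitary_mat dr W1" unfolding unitary_mat_def using W1c u1a u1b by blast
  have "adj_mat W2 * W2 = (1/\<delta>) \<cdot>\<^sub>m (H' * (\<delta> \<cdot>\<^sub>m H))"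
    unfolding aW2 unfolding W2_def by (rule mult_smult_assoc_mat[OF Hc(2) smult_carrier_mat[OF Hc(1)]])
  also have "\<dots> = 1\<^sub>m dl"
    unfolding mult_smult_distrib[OF Hc(2) Hc(1)] smult_smult_mat' di H(4) one_smult_mat' ..
  finally have u2a: "adj_mat W2 * W2 = 1\<^sub>m dl" .
  have "W2 * adj_mat W2 = \<delta> \<cdot>\<^sub>m (H * ((1/\<delta>) \<cdot>\<^sub>m H'))"
    unfolding aW2 unfolding W2_def by (rule mult_smult_assoc_mat[OF Hc(1) smult_carrier_mat[OF Hc(2)]])
  also have "\<dots> = 1\<^sub>m dl"
    unfolding mult_smult_distrib[OF Hc(1) Hc(2)] smult_smult_mat' di H(3) one_smult_mat' ..
  finally have u2b: "W2 * adj_mat W2 = 1\<^sub>m dl" .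
  have u2: "unitary_mat dl W2" unfolding unitary_mat_def using W2c u2a u2b by blast
  have e1: "X1' = \<delta> \<cdot>\<^sub>m (X1 * W1)"
    unfolding W1_def G mult_smult_distrib[OF c(1) Gc(1)] smult_smult_mat' di one_smult_mat' ..
  have e2: "Y1' = (1 / \<delta>) \<cdot>\<^sub>m (adj_mat W1 * Y1)"
    unfolding aW1 G mult_smult_assoc_mat[OF Gc(2) c(2)] smult_smult_mat' di one_smult_mat' ..
  have e3: "X2' = (1/\<delta>) \<cdot>\<^sub>m (X2 * W2)"
    unfolding W2_def H mult_smult_distrib[OF c(3) Hc(1)] smult_smult_mat' di one_smult_mat' ..
  have ddi: "1 / (1/\<delta>) = \<delta>" by simp
  have e4: "Y2' = (1 / (1/\<delta>)) \<cdot>\<^sub>m (adj_mat W2 * Y2)"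
    unfolding ddi aW2 H mult_smult_assoc_mat[OF Hc(2) c(4)] smult_smult_mat' di one_smult_mat' ..
  have d1: "1/\<delta> \<noteq> 0" using d0 by simp
  show ?thesis using d0 d1 di(1) u1 u2 e1 e2 e3 e4 by blast
qed

end
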